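(* Let $\langle E,\rightarrow\rangle$ be a computation, $b_1,b_2$ regular predicates and $b=b_1\wedge b_2$. For every event $e$ and process $p_i$, $F_b(e)[i]$ equals or precedes (on $p_i$) $F_{\min}(e)[i]$.
   Context: A computation is a directed graph $\langle E, \rightarrow\rangle$ whose vertices (events) are partitioned among processes $p_1,\dots,p_n$; events on each process are totally ordered, each process has an initial event and a final event, the path relation contains Lamport's happened-before relation, and all initial (resp. final) events lie in one strongly connected component. A vertex subset $C$ is a consistent cut if for every edge $(u,v)$, $v\in C$ implies $u\in C$. A predicate is regular if whenever consistent cuts $C_1,C_2$ satisfy it, so do $C_1\cap C_2$ and $C_1\cup C_2$. The slice of the computation with respect to a predicate $c$ is a directed graph on $E$ whose consistent cuts include every consistent cut satisfying $c$ and which has the fewest consistent cuts among all such graphs. For a regular predicate $c$, $F_c(e)[i]$ is the earliest event on $p_i$ reachable from $e$ by a path in the slice with respect to $c$. $F_{\min}(e)[i]$ is whichever of $F_{b_1}(e)[i]$ and $F_{b_2}(e)[i]$ occurs earlier on $p_i$. *)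

theory Defs
  imports Main
begin

text \<open>Events are pairs (i,k): the k-th event
  (k = 0,1,...) of process p_i.  len i is the number of events of p_i; (i,0) is its
  initial event and (i, len i - 1) its final event.  R is the edge relation of the
  directed graph; an edge (u,v) is written u -> v.\<close>

type_synonym event = "nat \<times> nat"

definition events :: "nat \<Rightarrow> (nat \<Rightarrow> nat) \<Rightarrow> event set" where
  "events n len = {(i,k). 1 \<le> i \<and> i \<le> n \<and> k < len i}"

definition init_ev :: "nat \<Rightarrow> event" where
  "init_ev i = (i, 0)"

definition final_ev :: "(nat \<Rightarrow> nat) \<Rightarrow> nat \<Rightarrow> event" where
  "final_ev len i = (i, len i - 1)"

definition computation :: "nat \<Rightarrow> (nat \<Rightarrow> nat) \<Rightarrow> event rel \<Rightarrow> bool" where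
  "computation n len R \<longleftrightarrow>
     1 \<le> n
   \<and> (\<forall>i. 1 \<le> i \<and> i \<le> n \<longrightarrow> 1 \<le> len i)
   \<and> R \<subseteq> events n len \<times> events n len
   \<comment> \<open>path relation contains happened-before (process order; message edges are edges of R)\<close>
   \<and> (\<forall>e\<in>events n len. \<forall>f\<in>events n len.
        fst e = fst f \<and> snd e < snd f \<longrightarrow> (e, f) \<in> R\<^sup>+)
   \<comment> \<open>initial events in one strongly connected component, likewise final events\<close>
   \<and> (\<forall>i j. 1 \<le> i \<and> i \<le> n \<and> 1 \<le> j \<and> j \<le> n \<longrightarrow>
        (init_ev i, init_ev j) \<in> R\<^sup>* \<and> (final_ev len i, final_ev len j) \<in> R\<^sup>*)"

definition consistent_cut :: "event set \<Rightarrow> event rel \<Rightarrow> event set \<Rightarrow> bool" where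
  "consistent_cut V G C \<longleftrightarrow> C \<subseteq> V \<and> (\<forall>(u,v)\<in>G. v \<in> C \<longrightarrow> u \<in> C)"

definition cuts :: "event set \<Rightarrow> event rel \<Rightarrow> event set set" where
  "cuts V G = {C. consistent_cut V G C}"

definition regular :: "event set \<Rightarrow> event rel \<Rightarrow> (event set \<Rightarrow> bool) \<Rightarrow> bool" where
  "regular V R c \<longleftrightarrow>
     (\<forall>C1 C2. consistent_cut V R C1 \<and> consistent_cut V R C2 \<and> c C1 \<and> c C2
        \<longrightarrow> c (C1 \<inter> C2) \<and> c (C1 \<union> C2))"

definition is_slice :: "event set \<Rightarrow> event rel \<Rightarrow> (event set \<Rightarrow> bool) \<Rightarrow> event rel \<Rightarrow> bool" where
  "is_slice V R c S \<longleftrightarrow>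
     S \<subseteq> V \<times> V
   \<and> {C. consistent_cut V R C \<and> c C} \<subseteq> cuts V S
   \<and> (\<forall>S'. S' \<subseteq> V \<times> V \<and> {C. consistent_cut V R C \<and> c C} \<subseteq> cuts V S'
          \<longrightarrow> card (cuts V S) \<le> card (cuts V S'))"

definition F :: "event set \<Rightarrow> event rel \<Rightarrow> event \<Rightarrow> nat \<Rightarrow> event" where
  "F V S e i = (THE f. f \<in> V \<and> fst f = i \<and> (e, f) \<in> S\<^sup>* \<and>
       (\<forall>g. g \<in> V \<and> fst g = i \<and> (e, g) \<in> S\<^sup>* \<longrightarrow> snd f \<le> snd g))"

definition Fmin :: "event set \<Rightarrow> event rel \<Rightarrow> event rel \<Rightarrow> event \<Rightarrow> nat \<Rightarrow> event" where
  "Fmin V S1 S2 e i =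
     (if snd (F V S1 e i) \<le> snd (F V S2 e i) then F V S1 e i else F V S2 e i)"

end

theory Submission
  imports Defs
begin

lemma cuts_fin: "finite V \<Longrightarrow> finite (cuts V G)"
  unfolding cuts_def consistent_cut_def
  by (rule finite_subset[of _ "Pow V"]) auto

lemma cuts_Un: "cuts V (G \<union> H) = cuts V G \<inter> cuts V H"
  unfolding cuts_def consistent_cut_def by blast

lemma slice_sub:
  assumes "is_slice V R c S" "G \<subseteq> V \<times> V" "{C. consistent_cut V R C \<and> c C} \<subseteq> cuts V G"
    "finite V"
  shows "cuts V S \<subseteq> cuts V G"
proof -
  have s: "S \<subseteq> V \<times> V" "{C. consistent_cut V R C \<and> c C} \<subseteq> cuts V S"
    "\<And>S'. S' \<subseteq> V \<times> V \<Longrightarrow> {C. consistent_cut V R C \<and> c C} \<subseteq> cuts V S'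
          \<Longrightarrow> card (cuts V S) \<le> card (cuts V S')"
    using assms(1) unfolding is_slice_def by blast+
  have "card (cuts V S) \<le> card (cuts V (S \<union> G))"
    apply (rule s(3)) using s(1,2) assms(2,3) cuts_Un by auto
  hence "card (cuts V S) \<le> card (cuts V S \<inter> cuts V G)" by (simp add: cuts_Un)
  hence "cuts V S \<inter> cuts V G = cuts V S"
    using card_subset_eq[of "cuts V S" "cuts V S \<inter> cuts V G"] cuts_fin[OF assms(4)]
    by (metis Int_lower1 card_mono antisym)
  thus ?thesis by blast
qed

lemma reach_transfer:
  assumes "cuts V S \<subseteq> cuts V S1" "S \<subseteq> V \<times> V" "f \<in> V" "(e, f) \<in> S1\<^sup>*"
  shows "(e, f) \<in> S\<^sup>*"
proof -
  define D where "D = {u\<in>V. (u,f)\<in>S\<^sup>*}"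
  have "D \<in> cuts V S" unfolding D_def cuts_def consistent_cut_def
    using assms(2) by (auto intro: converse_rtrancl_into_rtrancl)
  hence D: "D \<in> cuts V S1" using assms(1) by blast
  have "e \<in> D" using assms(4)
  proof (induction rule: converse_rtrancl_induct)
    case base then show ?case using assms(3) unfolding D_def by simp
  next
    case (step y z) then show ?case using D unfolding cuts_def consistent_cut_def by blast
  qed
  thus ?thesis unfolding D_def by simp
qed

lemma F_eq:
  assumes "finite V" "A = {k. (i,k) \<in> V \<and> (e,(i,k)) \<in> S\<^sup>*}" "A \<noteq> {}"
  shows "F V S e i = (i, Min A)"
proof -
  have fA: "finite A" using assms(1,2)
    by (rule_tac finite_subset[of _ "snd ` V"]) (auto simp: image_iff intro!: bexI[where x="(i,_)"])
  have m: "Min A \<in> A" using fA assms(3) by simp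
  show ?thesis unfolding F_def
  proof (rule the_equality)
    show "(i, Min A) \<in> V \<and> fst (i, Min A) = i \<and> (e, i, Min A) \<in> S\<^sup>* \<and>
      (\<forall>g. g \<in> V \<and> fst g = i \<and> (e, g) \<in> S\<^sup>* \<longrightarrow> snd (i, Min A) \<le> snd g)"
      using m fA assms(2) by auto
  next
    fix f assume h: "f \<in> V \<and> fst f = i \<and> (e, f) \<in> S\<^sup>* \<and>
      (\<forall>g. g \<in> V \<and> fst g = i \<and> (e, g) \<in> S\<^sup>* \<longrightarrow> snd f \<le> snd g)"
    then obtain k where f: "f = (i,k)" by (cases f) auto
    have "k \<in> A" using h f assms(2) by auto
    hence "Min A \<le> k" using fA by simp
    moreover have "k \<le> Min A" using h f m assms(2) by force
    ultimately show "f = (i, Min A)" using f by simp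
  qed
qed

lemma events_finite: "finite (events n len)"
proof -
  have "events n len = Sigma {1..n} (\<lambda>i. {..<len i})" unfolding events_def by auto
  thus ?thesis by simp
qed

lemma final_cut:
  assumes "computation n len R" "consistent_cut (events n len) R C" "1 \<le> i" "i \<le> n"
    "final_ev len i \<in> C"
  shows "C = events n len"
proof -
  have c: "\<forall>e\<in>events n len. \<forall>f\<in>events n len.
        fst e = fst f \<and> snd e < snd f \<longrightarrow> (e, f) \<in> R\<^sup>+"
    "\<forall>i j. 1 \<le> i \<and> i \<le> n \<and> 1 \<le> j \<and> j \<le> n \<longrightarrow> (final_ev len i, final_ev len j) \<in> R\<^sup>*"
    "\<forall>i. 1 \<le> i \<and> i \<le> n \<longrightarrow> 1 \<le> len i"
    using assms(1) unfolding computation_def by blast+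
  have cl: "\<And>u v. (u,v) \<in> R\<^sup>* \<Longrightarrow> v \<in> C \<Longrightarrow> u \<in> C"
  proof -
    fix u v assume "(u,v) \<in> R\<^sup>*" "v \<in> C"
    thus "u \<in> C"
      by (induction rule: converse_rtrancl_induct)
         (use assms(2) in \<open>auto simp: consistent_cut_def\<close>)
  qed
  have "events n len \<subseteq> C"
  proof
    fix x assume x: "x \<in> events n len"
    obtain j k where xe: "x = (j,k)" by (cases x)
    have j: "1 \<le> j" "j \<le> n" "k < len j" using x xe unfolding events_def by auto
    have fj: "final_ev len j \<in> C" using cl c(2) assms(3,4,5) j by blast
    show "x \<in> C"
    proof (cases "k = len j - 1")
      case True thus ?thesis using fj xe by (simp add: final_ev_def)
    next
      case False
      have "final_ev len j \<in> events n len" using j unfolding final_ev_def events_def by auto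
      hence "(x, final_ev len j) \<in> R\<^sup>+" using c(1) x False j xe
        by (auto simp: final_ev_def)
      thus ?thesis using cl fj by (meson trancl_into_rtrancl)
    qed
  qed
  thus ?thesis using assms(2) unfolding consistent_cut_def by blast
qed

lemma main_ineq:
  assumes comp: "computation n len R"
    and b: "\<And>C. b C \<Longrightarrow> b1 C"
    and sS: "is_slice (events n len) R b S"
    and sS1: "is_slice (events n len) R b1 S1"
    and e: "e \<in> events n len"
    and i: "1 \<le> i" "i \<le> n"
  shows "snd (F (events n len) S e i) \<le> snd (F (events n len) S1 e i)"
proof -
  let ?V = "events n len"
  have fV: "finite ?V" by (rule events_finite)
  have S1V: "S1 \<subseteq> ?V \<times> ?V" and L1: "{C. consistent_cut ?V R C \<and> b1 C} \<subseteq> cuts ?V S1"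
    using sS1 unfolding is_slice_def by blast+
  have SV: "S \<subseteq> ?V \<times> ?V" using sS unfolding is_slice_def by blast
  have sub: "cuts ?V S \<subseteq> cuts ?V S1"
    by (rule slice_sub[OF sS S1V _ fV]) (use L1 b in blast)
  define fin where "fin = final_ev len i"
  have finV: "fin \<in> ?V" using comp i unfolding computation_def fin_def final_ev_def events_def
    by auto
  define G where "G = S1 \<union> {(x, fin) | x. x \<in> ?V}"
  have GV: "G \<subseteq> ?V \<times> ?V" using S1V finV unfolding G_def by auto
  have "{C. consistent_cut ?V R C \<and> b1 C} \<subseteq> cuts ?V G"
  proof
    fix C assume C: "C \<in> {C. consistent_cut ?V R C \<and> b1 C}"
    hence C1: "C \<in> cuts ?V S1" using L1 by blast
    have "fin \<in> C \<Longrightarrow> C = ?V" using final_cut[OF comp _ i] C unfolding fin_def by blast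
    thus "C \<in> cuts ?V G" using C1 unfolding cuts_def consistent_cut_def G_def by blast
  qed
  hence sub1: "cuts ?V S1 \<subseteq> cuts ?V G" by (rule slice_sub[OF sS1 GV _ fV])
  define U where "U = {x. (e,x) \<in> S1\<^sup>*}"
  have "?V - U \<in> cuts ?V S1" unfolding cuts_def consistent_cut_def U_def
    using S1V by (auto intro: rtrancl_into_rtrancl)
  hence "?V - U \<in> cuts ?V G" using sub1 by blast
  hence "fin \<in> ?V - U \<Longrightarrow> ?V - U = ?V" unfolding cuts_def consistent_cut_def G_def
    by blast
  moreover have "e \<in> U" unfolding U_def by simp
  ultimately have "fin \<in> U" using e finV by blast
  define A1 where "A1 = {k. (i,k) \<in> ?V \<and> (e,(i,k)) \<in> S1\<^sup>*}"
  define A where "A = {k. (i,k) \<in> ?V \<and> (e,(i,k)) \<in> S\<^sup>*}"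
  have "len i - 1 \<in> A1" using \<open>fin \<in> U\<close> finV unfolding A1_def U_def fin_def final_ev_def
    by auto
  hence ne1: "A1 \<noteq> {}" by blast
  have AA: "A1 \<subseteq> A" unfolding A1_def A_def using reach_transfer[OF sub SV] by blast
  hence ne: "A \<noteq> {}" using ne1 by blast
  have fA: "finite A" unfolding A_def
    by (rule finite_subset[of _ "snd ` ?V"]) (use fV in \<open>auto simp: image_iff intro!: bexI[where x="(i,_)"]\<close>)
  have "F ?V S e i = (i, Min A)" by (rule F_eq[OF fV A_def ne])
  moreover have "F ?V S1 e i = (i, Min A1)" by (rule F_eq[OF fV A1_def ne1])
  moreover have "Min A \<le> Min A1" using AA ne1 fA by (simp add: Min_antimono)
  ultimately show ?thesis by simp
qed

theorem lemma13:
  fixes n :: nat and len :: "nat \<Rightarrow> nat" and R :: "event rel"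
    and b1 b2 b :: "event set \<Rightarrow> bool" and S S1 S2 :: "event rel"
    and e :: event and i :: nat
  assumes "computation n len R"
    and "regular (events n len) R b1"
    and "regular (events n len) R b2"
    and "b = (\<lambda>C. b1 C \<and> b2 C)"
    and "is_slice (events n len) R b S"
    and "is_slice (events n len) R b1 S1"
    and "is_slice (events n len) R b2 S2"
    and "e \<in> events n len"
    and "1 \<le> i" and "i \<le> n"
  shows "snd (F (events n len) S e i) \<le> snd (Fmin (events n len) S1 S2 e i)"
proof -
  have 1: "snd (F (events n len) S e i) \<le> snd (F (events n len) S1 e i)"
    by (rule main_ineq[OF assms(1) _ assms(5,6,8,9,10)]) (use assms(4) in simp)
  have 2: "snd (F (events n len) S e i) \<le> snd (F (events n len) S2 e i)"
    by (rule main_ineq[OF assms(1) _ assms(5,7,8,9,10)]) (use assms(4) in simp)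
  show ?thesis unfolding Fmin_def using 1 2 by simp
qed

end
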